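(* Assume (A1)–(A4) below and $a>0$. Let $u_0\in H^2(\mathbb{R}_+)$ with $u_0(0)=u_0'(0)=0$, extended by zero to $\mathbb{R}^-$. For $\Delta t\in(0,1]$ define $$u^{\rm app}_{j,n}=\frac1{\Delta x}\int_{x_j}^{x_{j+1}}u_0(y-a\,t^n)\,dy,\quad j,n\ge0,$$ $$\varepsilon_{j,n+k}=\frac1{\Delta t}\Big(\sum_{\sigma=0}^k\alpha_\sigma u^{\rm app}_{j,n+\sigma}+\lambda\sum_{\sigma=0}^{k-1}\beta_\sigma\sum_{\ell=-r}^pa_\ell u^{\rm app}_{j+\ell,n+\sigma}\Big),\quad j\ge r,\ n\ge0,$$ $$\eta_{j,n}=u^{\rm app}_{j,n},\quad 0\le j\le r-1,\ n\ge k.$$ Then there exists $C>0$, independent of $u_0$ and $\Delta t\in(0,1]$, such that $$\sup_{n\ge k}\sum_{j\ge r}\Delta x|\varepsilon_{j,n}|^2\le C\,\Delta t^2\|u_0''\|^2_{L^2(\mathbb{R}^+)}$$ and $$\sum_{n\ge k}\sum_{j=0}^{r-1}\Delta t|\eta_{j,n}|^2\le C\,\Delta t^2\|u_0'\|^2_{L^2(\mathbb{R}^+)}.$$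
   Context: Fix the following data: - a real number $a\neq0$; - nonnegative integers $p,r$ and real coefficients $a_{-r},\dots,a_p$ with $a_{-r}\neq0$ and $a_p\neq0$; - an integer $k\ge1$ and real coefficients $\alpha_0,\dots,\alpha_k$, $\beta_0,\dots,\beta_{k-1}$ with $\alpha_k=1$ and $|\alpha_0|+|\beta_0|>0$; - a fixed ratio $\lambda>0$. For $\Delta t\in(0,1]$ set $\Delta x=\Delta t/\lambda$, $x_j=j\Delta x$ and $t^n=n\Delta t$. Let $\mathcal A(z)=\sum_{\ell=-r}^p a_\ell z^\ell$ for $z\in\mathbb{C}\setminus\{0\}$. Assumptions: (A1) $\sum_{\ell=-r}^p a_\ell=0$ and $\sum_{\ell=-r}^p\ell a_\ell=a$. (A2) $\sum_{\sigma=0}^k\alpha_\sigma=0$ and $\sum_{\sigma=0}^k\sigma\alpha_\sigma=\sum_{\sigma=0}^{k-1}\beta_\sigma$. (A3) There is $C>0$ such that for all $\Delta t\in(0,1]$, every solution $(u_j^n)_{j\in\mathbb{Z},n\in\mathbb{N}}$ of $\sum_{\sigma=0}^k\alpha_\sigma u_j^{n+\sigma}+\lambda\sum_{\sigma=0}^{k-1}\beta_\sigma\sum_{\ell=-r}^pa_\ell u_{j+\ell}^{n+\sigma}=0$ ($j\in\mathbb{Z}$, $n\in\mathbb{N}$) satisfies $\sup_{n}\sum_{j\in\mathbb{Z}}\Delta x|u_j^n|^2\le C\sum_{\sigma=0}^{k-1}\sum_{j\in\mathbb{Z}}\Delta x|u_j^\sigma|^2$. (A4) $\mathcal A(e^{i\theta})\neq0$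 for all $\theta\in[-\pi,\pi]\setminus\{0\}$. *)

theory Defs
  imports "HOL-Analysis.Analysis"
begin

definition symbolA :: "nat \<Rightarrow> nat \<Rightarrow> (int \<Rightarrow> real) \<Rightarrow> complex \<Rightarrow> complex" where
  "symbolA r p ac z = (\<Sum>l\<in>{-int r..int p}. complex_of_real (ac l) * z powi l)"

definition scheme_op ::
  "nat \<Rightarrow> nat \<Rightarrow> (int \<Rightarrow> real) \<Rightarrow> nat \<Rightarrow> (nat \<Rightarrow> real) \<Rightarrow> (nat \<Rightarrow> real) \<Rightarrow> real
   \<Rightarrow> (int \<Rightarrow> nat \<Rightarrow> real) \<Rightarrow> int \<Rightarrow> nat \<Rightarrow> real" where
  "scheme_op r p ac k alpha beta lam u j n =
     (\<Sum>\<sigma>\<in>{0..k}. alpha \<sigma> * u j (n + \<sigma>))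
     + lam * (\<Sum>\<sigma><k. beta \<sigma> * (\<Sum>l\<in>{-int r..int p}. ac l * u (j + l) (n + \<sigma>)))"

text \<open>(A3): uniform l^2 stability of the scheme on the whole line, for all dt in (0,1],
  with dx = dt / lambda. Sums are taken in ennreal (so that infinite l^2 norms are allowed).\<close>
definition l2_stable ::
  "nat \<Rightarrow> nat \<Rightarrow> (int \<Rightarrow> real) \<Rightarrow> nat \<Rightarrow> (nat \<Rightarrow> real) \<Rightarrow> (nat \<Rightarrow> real) \<Rightarrow> real \<Rightarrow> bool" where
  "l2_stable r p ac k alpha beta lam \<longleftrightarrow>
     (\<exists>C>0. \<forall>dt. 0 < dt \<and> dt \<le> 1 \<longrightarrow>
        (\<forall>u :: int \<Rightarrow> nat \<Rightarrow> real.
           (\<forall>j n. scheme_op r p ac k alpha beta lam u j n = 0) \<longrightarrow>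
           (SUP n. (\<Sum>\<^sub>\<infinity> j. ennreal (dt / lam * (u j n)\<^sup>2)))
             \<le> ennreal C * (\<Sum>\<sigma><k. (\<Sum>\<^sub>\<infinity> j. ennreal (dt / lam * (u j \<sigma>)\<^sup>2)))))"

definition L2_half :: "(real \<Rightarrow> real) \<Rightarrow> bool" where
  "L2_half f \<longleftrightarrow> f \<in> borel_measurable lborel \<and>
     (\<integral>\<^sup>+ x\<in>{0..}. ennreal ((f x)\<^sup>2) \<partial>lborel) < \<infinity>"

text \<open>u0 in H^2(R_+) with u0(0) = u0'(0) = 0, with (weak) derivatives u1 = u0', u2 = u0'',
  using the absolutely continuous representatives; u0 is extended by zero to the negative axis.\<close>
definition H2_zero :: "(real \<Rightarrow> real) \<Rightarrow> (real \<Rightarrow> real) \<Rightarrow> (real \<Rightarrow> real) \<Rightarrow> bool" where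
  "H2_zero u0 u1 u2 \<longleftrightarrow> L2_half u0 \<and> L2_half u1 \<and> L2_half u2 \<and>
     (\<forall>x\<ge>0. u0 x = (LBINT y:{0..x}. u1 y)) \<and>
     (\<forall>x\<ge>0. u1 x = (LBINT y:{0..x}. u2 y)) \<and>
     (\<forall>x<0. u0 x = 0)"

definition L2_norm_sq :: "(real \<Rightarrow> real) \<Rightarrow> ennreal" where
  "L2_norm_sq f = (\<integral>\<^sup>+ x\<in>{0..}. ennreal ((f x)\<^sup>2) \<partial>lborel)"

definition uapp :: "real \<Rightarrow> real \<Rightarrow> (real \<Rightarrow> real) \<Rightarrow> real \<Rightarrow> int \<Rightarrow> nat \<Rightarrow> real" where
  "uapp a lam u0 dt j n =
     (let dx = dt / lam in
      (1 / dx) * (LBINT y:{real_of_int j * dx .. real_of_int (j + 1) * dx}. u0 (y - a * (real n * dt))))"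

text \<open>Consistency error: eps_{j,m} for m \<ge> k, i.e. eps_{j,n+k} with n = m - k.\<close>
definition eps_err ::
  "real \<Rightarrow> nat \<Rightarrow> nat \<Rightarrow> (int \<Rightarrow> real) \<Rightarrow> nat \<Rightarrow> (nat \<Rightarrow> real) \<Rightarrow> (nat \<Rightarrow> real) \<Rightarrow> real
   \<Rightarrow> (real \<Rightarrow> real) \<Rightarrow> real \<Rightarrow> int \<Rightarrow> nat \<Rightarrow> real" where
  "eps_err a r p ac k alpha beta lam u0 dt j m =
     (1 / dt) * scheme_op r p ac k alpha beta lam (uapp a lam u0 dt) j (m - k)"

end

theory Submission
  imports Defs
begin

lemma abs_le_1_sq: "\<bar>x::real\<bar> \<le> 1 + x\<^sup>2"
proof -
  have "0 \<le> (\<bar>x\<bar> - 1/2)\<^sup>2" by simp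
  also have "\<dots> = x\<^sup>2 - \<bar>x\<bar> + 1/4" by (simp add: power2_eq_square algebra_simps abs_mult_self_eq)
  finally show ?thesis by simp
qed

lemma loc_int:
  fixes g :: "real \<Rightarrow> real"
  assumes [measurable]: "g \<in> borel_measurable lborel"
    and fin: "(\<integral>\<^sup>+x. ennreal ((g x)\<^sup>2) \<partial>lborel) < \<infinity>"
  shows "set_integrable lborel {a..b} g"
proof -
  have "(\<integral>\<^sup>+x. ennreal (norm (indicator {a..b} x *\<^sub>R g x)) \<partial>lborel)
      \<le> (\<integral>\<^sup>+x. indicator {a..b} x + ennreal ((g x)\<^sup>2) \<partial>lborel)"
  proof (rule nn_integral_mono)
    fix x
    have "\<bar>g x\<bar> \<le> 1 + (g x)\<^sup>2" by (rule abs_le_1_sq)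
    then have "ennreal \<bar>g x\<bar> \<le> ennreal (1 + (g x)\<^sup>2)" by (rule ennreal_leI)
    also have "\<dots> = 1 + ennreal ((g x)\<^sup>2)" by (subst ennreal_plus) auto
    finally have *: "ennreal \<bar>g x\<bar> \<le> 1 + ennreal ((g x)\<^sup>2)" .
    show "ennreal (norm (indicator {a..b} x *\<^sub>R g x)) \<le> indicator {a..b} x + ennreal ((g x)\<^sup>2)"
      using * by (auto simp: indicator_def)
  qed
  also have "\<dots> = emeasure lborel {a..b} + (\<integral>\<^sup>+x. ennreal ((g x)\<^sup>2) \<partial>lborel)"
    by (subst nn_integral_add) auto
  also have "\<dots> < \<infinity>" using fin by (cases "a \<le> b") (auto simp: less_top)
  finally show ?thesis unfolding set_integrable_def
    by (subst integrable_iff_bounded) auto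
qed

lemma ftc_ext:
  fixes f F :: "real \<Rightarrow> real"
  assumes loc: "\<And>a b. set_integrable lborel {a..b} f"
    and z: "\<And>y. y < 0 \<Longrightarrow> f y = 0"
    and Fpos: "\<And>x. x \<ge> 0 \<Longrightarrow> F x = (LBINT y:{0..x}. f y)"
    and Fneg: "\<And>x. x < 0 \<Longrightarrow> F x = 0"
    and ab: "a \<le> b"
  shows "F b - F a = (LBINT y:{a..b}. f y)"
proof -
  define s where "s = min a 0"
  have ii: "interval_lebesgue_integrable lborel (ereal c) (ereal d) f" for c d
  proof (cases "c \<le> d")
    case True
    then show ?thesis unfolding interval_lebesgue_integrable_def
      by (auto intro: set_integrable_subset[OF loc[of c d]])
  next
    case False
    then show ?thesis unfolding interval_lebesgue_integrable_def
      by (auto intro: set_integrable_subset[OF loc[of d c]])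
  qed
  have zero: "(LBINT y=ereal c..ereal d. f y) = 0" if "c \<le> d" "d \<le> 0" for c d
  proof -
    have "(LBINT y=ereal c..ereal d. f y) = (LBINT y:{c<..<d}. f y)"
      using that by (simp add: interval_lebesgue_integral_def)
    also have "\<dots> = (LBINT y:{c<..<d}. 0)"
      by (rule set_lebesgue_integral_cong) (use that z in auto)
    finally show ?thesis by simp
  qed
  have Fs: "F x = (LBINT y=ereal s..ereal x. f y)" if "s \<le> x" for x
  proof (cases "x \<ge> 0")
    case True
    have "(LBINT y=ereal s..ereal x. f y) = (LBINT y=ereal s..ereal 0. f y) + (LBINT y=ereal 0..ereal x. f y)"
      by (rule interval_integral_sum[symmetric]) (simp add: ii min_def max_def)
    also have "(LBINT y=ereal s..ereal 0. f y) = 0" by (rule zero) (auto simp: s_def)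
    also have "(LBINT y=ereal 0..ereal x. f y) = (LBINT y:{0..x}. f y)"
      using True by (simp add: interval_integral_Icc)
    finally show ?thesis using Fpos[OF True] by simp
  next
    case False
    then show ?thesis using zero[of s x] that Fneg by auto
  qed
  have "(LBINT y=ereal s..ereal a. f y) + (LBINT y=ereal a..ereal b. f y) = (LBINT y=ereal s..ereal b. f y)"
    by (rule interval_integral_sum) (simp add: ii min_def max_def)
  moreover have "(LBINT y=ereal a..ereal b. f y) = (LBINT y:{a..b}. f y)"
    using ab by (simp add: interval_integral_Icc)
  ultimately show ?thesis using Fs[of a] Fs[of b] ab by (auto simp: s_def)
qed

lemma set_int_abs_enn:
  fixes f :: "real \<Rightarrow> real"
  assumes "set_integrable lborel A f"
  shows "ennreal \<bar>LBINT x:A. f x\<bar> \<le> (\<integral>\<^sup>+x\<in>A. ennreal \<bar>f x\<bar> \<partial>lborel)"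
proof -
  have "ennreal (norm (LBINT x:A. f x)) \<le> (\<integral>\<^sup>+x. ennreal (norm (indicator A x *\<^sub>R f x)) \<partial>lborel)"
    using integral_norm_bound_ennreal[of lborel "\<lambda>x. indicator A x *\<^sub>R f x"] assms
    unfolding set_integrable_def set_lebesgue_integral_def by simp
  also have "\<dots> = (\<integral>\<^sup>+x\<in>A. ennreal \<bar>f x\<bar> \<partial>lborel)"
    by (rule nn_integral_cong) (auto simp: indicator_def)
  finally show ?thesis by simp
qed

lemma translate_int:
  fixes f :: "real \<Rightarrow> real"
  shows "(LBINT y:{A..A+d}. f y) = (LBINT t:{0..d}. f (A + t))"
proof -
  have "(LBINT y:{A..A+d}. f y) = (\<integral>y. indicator {A..A+d} y *\<^sub>R f y \<partial>lborel)"
    by (simp add: set_lebesgue_integral_def)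
  also have "\<dots> = \<bar>1\<bar> *\<^sub>R (\<integral>t. indicator {A..A+d} (A + 1 * t) *\<^sub>R f (A + 1 * t) \<partial>lborel)"
    by (rule lborel_integral_real_affine) simp
  also have "\<dots> = (\<integral>t. indicator {0..d} t *\<^sub>R f (A + t) \<partial>lborel)"
    by (auto intro!: Bochner_Integration.integral_cong simp: indicator_def)
  finally show ?thesis by (simp add: set_lebesgue_integral_def)
qed

lemma translate_integrable:
  fixes f :: "real \<Rightarrow> real"
  assumes "set_integrable lborel {A..A+d} f"
  shows "set_integrable lborel {0..d} (\<lambda>t. f (A + t))"
proof -
  have "integrable lborel (\<lambda>t. indicator {A..A+d} (A + 1 * t) *\<^sub>R f (A + 1 * t))"
    using assms unfolding set_integrable_def
    by (intro lborel_integrable_real_affine) auto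
  also have "(\<lambda>t. indicator {A..A+d} (A + 1 * t) *\<^sub>R f (A + 1 * t)) = (\<lambda>t. indicator {0..d} t *\<^sub>R f (A + t))"
    by (auto simp: indicator_def)
  finally show ?thesis unfolding set_integrable_def .
qed

lemma Vdiff:
  fixes V W :: "real \<Rightarrow> real"
  assumes FV: "\<And>a b. a \<le> b \<Longrightarrow> V b - V a = (LBINT y:{a..b}. W y)"
    and locW: "\<And>a b. set_integrable lborel {a..b} W"
    and yw: "\<bar>y - w\<bar> \<le> R"
  shows "ennreal \<bar>V y - V w\<bar> \<le> (\<integral>\<^sup>+x\<in>{w-R..w+R}. ennreal \<bar>W x\<bar> \<partial>lborel)"
proof -
  define lo where "lo = min y w"
  define hi where "hi = max y w"
  have "\<bar>V y - V w\<bar> = \<bar>V hi - V lo\<bar>" by (auto simp: lo_def hi_def min_def max_def abs_minus_commute)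
  also have "\<dots> = \<bar>LBINT x:{lo..hi}. W x\<bar>" using FV[of lo hi] by (simp add: lo_def hi_def)
  finally have "ennreal \<bar>V y - V w\<bar> \<le> (\<integral>\<^sup>+x\<in>{lo..hi}. ennreal \<bar>W x\<bar> \<partial>lborel)"
    using set_int_abs_enn[OF locW[of lo hi]] by simp
  also have "\<dots> \<le> (\<integral>\<^sup>+x\<in>{w-R..w+R}. ennreal \<bar>W x\<bar> \<partial>lborel)"
    using yw by (intro nn_integral_mono) (auto simp: indicator_def lo_def hi_def)
  finally show ?thesis .
qed

lemma set_integrable_const_Icc: "set_integrable lborel {a..b::real} (\<lambda>_. c::real)"
  unfolding set_integrable_def
  by (cases "a \<le> b") (auto intro!: integrable_scaleR_left simp: integrable_indicator_iff less_top[symmetric])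

lemma taylor1:
  fixes U V W :: "real \<Rightarrow> real"
  assumes FU: "\<And>a b. a \<le> b \<Longrightarrow> U b - U a = (LBINT y:{a..b}. V y)"
    and FV: "\<And>a b. a \<le> b \<Longrightarrow> V b - V a = (LBINT y:{a..b}. W y)"
    and locV: "\<And>a b. set_integrable lborel {a..b} V"
    and locW: "\<And>a b. set_integrable lborel {a..b} W"
  shows "ennreal \<bar>U (w+h) - U w - h * V w\<bar> \<le> ennreal \<bar>h\<bar> * (\<integral>\<^sup>+x\<in>{w-\<bar>h\<bar>..w+\<bar>h\<bar>}. ennreal \<bar>W x\<bar> \<partial>lborel)"
proof -
  define G where "G = (\<integral>\<^sup>+x\<in>{w-\<bar>h\<bar>..w+\<bar>h\<bar>}. ennreal \<bar>W x\<bar> \<partial>lborel)"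
  define lo where "lo = min w (w+h)"
  define hi where "hi = max w (w+h)"
  have lohi: "lo \<le> hi" "hi - lo = \<bar>h\<bar>" by (auto simp: lo_def hi_def)
  have int: "set_integrable lborel {lo..hi} (\<lambda>y. V y - V w)"
    by (intro set_integral_diff(1) locV set_integrable_const_Icc)
  have "(LBINT y:{lo..hi}. V y - V w) = (LBINT y:{lo..hi}. V y) - (LBINT y:{lo..hi}. V w)"
    by (intro set_integral_diff(2) locV set_integrable_const_Icc)
  also have "\<dots> = (U hi - U lo) - (hi - lo) * V w"
    using FU[OF lohi(1)] lohi by (simp add: set_integral_const)
  finally have eq: "(LBINT y:{lo..hi}. V y - V w) = (U hi - U lo) - (hi - lo) * V w" .
  have eqa: "\<bar>U (w+h) - U w - h * V w\<bar> = \<bar>LBINT y:{lo..hi}. V y - V w\<bar>"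
  proof (cases "h \<ge> 0")
    case True
    then have "lo = w" "hi = w + h" by (auto simp: lo_def hi_def)
    then show ?thesis unfolding eq by simp
  next
    case False
    then have "lo = w + h" "hi = w" by (auto simp: lo_def hi_def)
    then show ?thesis unfolding eq by (simp add: abs_minus_commute[of "U w"] algebra_simps)
  qed
  have "ennreal \<bar>U (w+h) - U w - h * V w\<bar> \<le> (\<integral>\<^sup>+y\<in>{lo..hi}. ennreal \<bar>V y - V w\<bar> \<partial>lborel)"
    unfolding eqa by (rule set_int_abs_enn[OF int])
  also have "\<dots> \<le> (\<integral>\<^sup>+y. G * indicator {lo..hi} y \<partial>lborel)"
  proof (rule nn_integral_mono)
    fix y
    show "ennreal \<bar>V y - V w\<bar> * indicator {lo..hi} y \<le> G * indicator {lo..hi} y"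
    proof (cases "y \<in> {lo..hi}")
      case True
      then have "\<bar>y - w\<bar> \<le> \<bar>h\<bar>" by (auto simp: lo_def hi_def)
      then show ?thesis using Vdiff[OF FV locW] True by (simp add: G_def)
    qed simp
  qed
  also have "\<dots> = G * ennreal \<bar>h\<bar>"
    using lohi by (simp add: nn_integral_cmult_indicator)
  finally show ?thesis by (simp add: G_def mult.commute)
qed

lemma U_int:
  fixes U V :: "real \<Rightarrow> real"
  assumes Um[measurable]: "U \<in> borel_measurable borel"
    and FU: "\<And>a b. a \<le> b \<Longrightarrow> U b - U a = (LBINT y:{a..b}. V y)"
    and locV: "\<And>a b. set_integrable lborel {a..b} V"
  shows "set_integrable lborel {0..d} (\<lambda>t. U (c + t))"
  unfolding set_integrable_def
proof (rule integrableI_bounded_set_indicator[where B = "\<bar>U c\<bar> + (LBINT y:{c..c+d}. \<bar>V y\<bar>)"])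
  show "(\<lambda>t. U (c + t)) \<in> borel_measurable lborel" by measurable
  show "AE x in lborel. x \<in> {0..d} \<longrightarrow> norm (U (c + x)) \<le> \<bar>U c\<bar> + (LBINT y:{c..c+d}. \<bar>V y\<bar>)"
  proof (rule AE_I2, safe)
    fix t assume t: "t \<in> {0..d}"
    have "\<bar>U (c+t) - U c\<bar> = \<bar>LBINT y:{c..c+t}. V y\<bar>" using FU[of c "c+t"] t by simp
    also have "\<dots> \<le> (LBINT y:{c..c+t}. \<bar>V y\<bar>)"
      using set_integral_norm_bound[OF locV[of c "c+t"]] by simp
    also have "\<dots> \<le> (LBINT y:{c..c+d}. \<bar>V y\<bar>)"
      unfolding set_lebesgue_integral_def
      using set_integrable_abs[OF locV[of c "c+t"]] set_integrable_abs[OF locV[of c "c+d"]] t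
      by (intro integral_mono) (auto simp: set_integrable_def indicator_def)
    finally show "norm (U (c + t)) \<le> \<bar>U c\<bar> + (LBINT y:{c..c+d}. \<bar>V y\<bar>)" by simp
  qed
  show "emeasure lborel {0..d} < \<infinity>"
    by (cases "0 \<le> d") auto
qed auto

lemma avg_taylor:
  fixes U V W :: "real \<Rightarrow> real"
  assumes Um[measurable]: "U \<in> borel_measurable borel"
    and FU: "\<And>a b. a \<le> b \<Longrightarrow> U b - U a = (LBINT y:{a..b}. V y)"
    and FV: "\<And>a b. a \<le> b \<Longrightarrow> V b - V a = (LBINT y:{a..b}. W y)"
    and locV: "\<And>a b. set_integrable lborel {a..b} V"
    and locW: "\<And>a b. set_integrable lborel {a..b} W"
    and d: "0 \<le> d"
  shows "ennreal \<bar>(LBINT t:{0..d}. U (w+t+h)) - (LBINT t:{0..d}. U (w+t)) - h * (LBINT t:{0..d}. V (w+t))\<bar>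
     \<le> ennreal d * ennreal \<bar>h\<bar> * (\<integral>\<^sup>+x\<in>{w-\<bar>h\<bar>..w+d+\<bar>h\<bar>}. ennreal \<bar>W x\<bar> \<partial>lborel)"
proof -
  define G where "G = (\<integral>\<^sup>+x\<in>{w-\<bar>h\<bar>..w+d+\<bar>h\<bar>}. ennreal \<bar>W x\<bar> \<partial>lborel)"
  have i1: "set_integrable lborel {0..d} (\<lambda>t. U (w+t+h))"
    using U_int[OF Um FU locV, of d "w+h"] by (simp add: add.commute add.left_commute)
  have i2: "set_integrable lborel {0..d} (\<lambda>t. U (w+t))"
    using U_int[OF Um FU locV, of d "w"] by simp
  have i3: "set_integrable lborel {0..d} (\<lambda>t. h * V (w+t))"
    using translate_integrable[OF locV[of w "w+d"]] by simp
  have eqI: "(LBINT t:{0..d}. U (w+t+h)) - (LBINT t:{0..d}. U (w+t)) - h * (LBINT t:{0..d}. V (w+t))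
      = (LBINT t:{0..d}. U (w+t+h) - U (w+t) - h * V (w+t))"
    using i1 i2 i3 by (simp add: set_integral_diff)
  have intI: "set_integrable lborel {0..d} (\<lambda>t. U (w+t+h) - U (w+t) - h * V (w+t))"
    using i1 i2 i3 by (intro set_integral_diff(1))
  have "ennreal \<bar>(LBINT t:{0..d}. U (w+t+h)) - (LBINT t:{0..d}. U (w+t)) - h * (LBINT t:{0..d}. V (w+t))\<bar>
      \<le> (\<integral>\<^sup>+t\<in>{0..d}. ennreal \<bar>U (w+t+h) - U (w+t) - h * V (w+t)\<bar> \<partial>lborel)"
    unfolding eqI by (rule set_int_abs_enn[OF intI])
  also have "\<dots> \<le> (\<integral>\<^sup>+t. (ennreal \<bar>h\<bar> * G) * indicator {0..d} t \<partial>lborel)"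
  proof (rule nn_integral_mono)
    fix t
    show "ennreal \<bar>U (w+t+h) - U (w+t) - h * V (w+t)\<bar> * indicator {0..d} t \<le> (ennreal \<bar>h\<bar> * G) * indicator {0..d} t"
    proof (cases "t \<in> {0..d}")
      case True
      have "ennreal \<bar>U (w+t+h) - U (w+t) - h * V (w+t)\<bar>
          \<le> ennreal \<bar>h\<bar> * (\<integral>\<^sup>+x\<in>{w+t-\<bar>h\<bar>..w+t+\<bar>h\<bar>}. ennreal \<bar>W x\<bar> \<partial>lborel)"
        using taylor1[OF FU FV locV locW, of "w+t" h] by simp
      also have "\<dots> \<le> ennreal \<bar>h\<bar> * G"
        unfolding G_def using True
        by (intro mult_left_mono nn_integral_mono) (auto simp: indicator_def)
      finally show ?thesis using True by simp
    qed simp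
  qed
  also have "\<dots> = ennreal \<bar>h\<bar> * G * ennreal d"
    using d by (simp add: nn_integral_cmult_indicator)
  finally show ?thesis by (simp add: G_def mult_ac)
qed

lemma scheme_alg:
  fixes Ef Rm hh :: "_"
  assumes Ef: "\<And>h. Ef h = AA + h * BB + Rm h"
    and hh: "\<And>l \<sigma>. hh l \<sigma> = real_of_int l * dx - a * real \<sigma> * dt"
    and A1: "(\<Sum>l\<in>{-int r..int p}. ac l) = 0" "(\<Sum>l\<in>{-int r..int p}. real_of_int l * ac l) = a"
    and A2: "(\<Sum>\<sigma>\<in>{0..k}. alpha \<sigma>) = 0"
            "(\<Sum>\<sigma>\<in>{0..k}. real \<sigma> * alpha \<sigma>) = (\<Sum>\<sigma><k. beta \<sigma>)"
    and dd: "lam * dx = dt"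
  shows "(\<Sum>\<sigma>\<in>{0..k}. alpha \<sigma> * Ef (hh 0 \<sigma>)) + lam * (\<Sum>\<sigma><k. beta \<sigma> * (\<Sum>l\<in>{-int r..int p}. ac l * Ef (hh l \<sigma>)))
       = (\<Sum>\<sigma>\<in>{0..k}. alpha \<sigma> * Rm (hh 0 \<sigma>)) + lam * (\<Sum>\<sigma><k. beta \<sigma> * (\<Sum>l\<in>{-int r..int p}. ac l * Rm (hh l \<sigma>)))"
proof -
  have e1: "(\<Sum>\<sigma>\<in>{0..k}. alpha \<sigma> * Ef (hh 0 \<sigma>)) = AA * (\<Sum>\<sigma>\<in>{0..k}. alpha \<sigma>)
      - a * dt * BB * (\<Sum>\<sigma>\<in>{0..k}. real \<sigma> * alpha \<sigma>) + (\<Sum>\<sigma>\<in>{0..k}. alpha \<sigma> * Rm (hh 0 \<sigma>))"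
    by (simp add: Ef hh algebra_simps sum.distrib sum_distrib_left sum_subtractf)
  have e2: "(\<Sum>l\<in>{-int r..int p}. ac l * Ef (hh l \<sigma>)) = AA * (\<Sum>l\<in>{-int r..int p}. ac l)
      + BB * dx * (\<Sum>l\<in>{-int r..int p}. real_of_int l * ac l)
      - a * real \<sigma> * dt * BB * (\<Sum>l\<in>{-int r..int p}. ac l)
      + (\<Sum>l\<in>{-int r..int p}. ac l * Rm (hh l \<sigma>))" for \<sigma>
    by (simp add: Ef hh algebra_simps sum.distrib sum_distrib_left sum_subtractf)
  have e3: "(\<Sum>\<sigma><k. beta \<sigma> * (\<Sum>l\<in>{-int r..int p}. ac l * Ef (hh l \<sigma>)))
      = BB * dx * a * (\<Sum>\<sigma><k. beta \<sigma>) + (\<Sum>\<sigma><k. beta \<sigma> * (\<Sum>l\<in>{-int r..int p}. ac l * Rm (hh l \<sigma>)))"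
    unfolding e2 A1 by (simp add: algebra_simps sum.distrib sum_distrib_left)
  show ?thesis unfolding e1 e3 A2 using dd[symmetric] by (simp add: algebra_simps)
qed

lemma cs_interval:
  fixes W :: "real \<Rightarrow> real"
  assumes [measurable]: "W \<in> borel_measurable borel" and AB: "A \<le> B"
  shows "(\<integral>\<^sup>+x\<in>{A..B}. ennreal \<bar>W x\<bar> \<partial>lborel)\<^sup>2 \<le> ennreal (B - A) * (\<integral>\<^sup>+x\<in>{A..B}. ennreal ((W x)\<^sup>2) \<partial>lborel)"
proof -
  have "(\<integral>\<^sup>+x. (ennreal \<bar>W x\<bar> * indicator {A..B} x) * indicator {A..B} x \<partial>lborel)\<^sup>2
     \<le> (\<integral>\<^sup>+x. (ennreal \<bar>W x\<bar> * indicator {A..B} x) ^ 2 \<partial>lborel) * (\<integral>\<^sup>+x. (indicator {A..B} x :: ennreal) ^ 2 \<partial>lborel)"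
    by (rule Cauchy_Schwarz_nn_integral) auto
  moreover have "(\<lambda>x. (ennreal \<bar>W x\<bar> * indicator {A..B} x) * indicator {A..B} x) = (\<lambda>x. ennreal \<bar>W x\<bar> * indicator {A..B} x)"
    by (auto simp: indicator_def)
  moreover have "(\<lambda>x. (ennreal \<bar>W x\<bar> * indicator {A..B} x) ^ 2) = (\<lambda>x. ennreal ((W x)\<^sup>2) * indicator {A..B} x)"
    by (auto simp: indicator_def ennreal_power power2_abs)
  moreover have "(\<lambda>x. (indicator {A..B} x :: ennreal) ^ 2) = indicator {A..B}"
    by (auto simp: indicator_def)
  ultimately show ?thesis using AB by (simp add: mult.commute)
qed

lemma count_bound:
  fixes F :: "int set" and x c dx L :: real
  assumes F: "finite F" and dx: "dx > 0" and L: "L \<ge> 0"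
  shows "(\<Sum>j\<in>F. (indicator {real_of_int j * dx - c .. real_of_int j * dx - c + L} x :: ennreal))
           \<le> of_nat (nat \<lceil>L/dx\<rceil> + 1)"
proof -
  define s where "s = (x + c - L) / dx"
  define S where "S = {j::int. x \<in> {real_of_int j * dx - c .. real_of_int j * dx - c + L}}"
  have "(\<Sum>j\<in>F. (indicator {real_of_int j * dx - c .. real_of_int j * dx - c + L} x :: ennreal))
      = (\<Sum>j\<in>F. if j \<in> S then 1 else 0)"
    by (rule sum.cong) (auto simp: S_def indicator_def)
  also have "\<dots> = of_nat (card (F \<inter> S))"
    using F by (simp add: sum.If_cases)
  also have "card (F \<inter> S) \<le> card {\<lceil>s\<rceil> .. \<lceil>s\<rceil> + \<lceil>L/dx\<rceil>}"
  proof (rule card_mono)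
    show "F \<inter> S \<subseteq> {\<lceil>s\<rceil>..\<lceil>s\<rceil> + \<lceil>L / dx\<rceil>}"
    proof
      fix j assume "j \<in> F \<inter> S"
      then have j1: "real_of_int j * dx - c \<le> x" and j2: "x \<le> real_of_int j * dx - c + L"
        by (auto simp: S_def)
      have "s \<le> real_of_int j" using j2 dx by (simp add: s_def field_simps)
      then have "\<lceil>s\<rceil> \<le> j" by (simp add: ceiling_le_iff)
      moreover have "real_of_int j \<le> s + L / dx" using j1 dx by (simp add: s_def field_simps)
      then have "real_of_int j \<le> real_of_int (\<lceil>s\<rceil> + \<lceil>L/dx\<rceil>)"
        using le_of_int_ceiling[of s] le_of_int_ceiling[of "L/dx"] by (simp only: of_int_add)
      then have "j \<le> \<lceil>s\<rceil> + \<lceil>L/dx\<rceil>" by linarith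
      ultimately show "j \<in> {\<lceil>s\<rceil>..\<lceil>s\<rceil> + \<lceil>L / dx\<rceil>}" by simp
    qed
  qed simp
  then have c: "card (F \<inter> S) \<le> nat \<lceil>L/dx\<rceil> + 1"
    using L dx by (simp add: nat_add_distrib)
  then have "of_nat (card (F \<inter> S)) \<le> (of_nat (nat \<lceil>L/dx\<rceil> + 1) :: ennreal)"
    by (rule of_nat_mono)
  finally show ?thesis .
qed

lemma uapp_shift:
  assumes lam: "lam > 0" and dt: "dt > 0"
  shows "uapp a lam u0 dt (j + l) (n + \<sigma>)
    = (LBINT t:{0..dt/lam}. u0 (real_of_int j * (dt/lam) - a * (real n * dt) + t
         + (real_of_int l * (dt/lam) - a * real \<sigma> * dt))) / (dt/lam)"
proof -
  define dx where "dx = dt / lam"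
  define A where "A = real_of_int (j + l) * dx"
  have set: "{real_of_int (j + l) * dx .. real_of_int (j + l + 1) * dx} = {A..A+dx}"
    by (simp add: A_def algebra_simps)
  have arg: "\<And>t. A + t - a * (real (n + \<sigma>) * dt)
      = real_of_int j * dx - a * (real n * dt) + t + (real_of_int l * dx - a * real \<sigma> * dt)"
    by (simp add: A_def algebra_simps)
  have "uapp a lam u0 dt (j + l) (n + \<sigma>) = (1/dx) * (LBINT y:{A..A+dx}. u0 (y - a * (real (n + \<sigma>) * dt)))"
    unfolding uapp_def Let_def dx_def[symmetric] set ..
  also have "\<dots> = (1/dx) * (LBINT t:{0..dx}. u0 (A + t - a * (real (n + \<sigma>) * dt)))"
    by (subst translate_int) simp
  also have "\<dots> = (1/dx) * (LBINT t:{0..dx}. u0 (real_of_int j * dx - a * (real n * dt) + t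
         + (real_of_int l * dx - a * real \<sigma> * dt)))"
    unfolding arg ..
  finally show ?thesis by (simp add: dx_def)
qed

lemma nn_fin_of_set_integrable:
  fixes W :: "real \<Rightarrow> real"
  assumes "set_integrable lborel A W"
  shows "(\<integral>\<^sup>+x\<in>A. ennreal \<bar>W x\<bar> \<partial>lborel) \<noteq> top"
proof -
  have "(\<integral>\<^sup>+x. ennreal (norm (indicator A x *\<^sub>R W x)) \<partial>lborel) < \<infinity>"
    using assms unfolding set_integrable_def integrable_iff_bounded by simp
  also have "(\<integral>\<^sup>+x. ennreal (norm (indicator A x *\<^sub>R W x)) \<partial>lborel) = (\<integral>\<^sup>+x\<in>A. ennreal \<bar>W x\<bar> \<partial>lborel)"
    by (rule nn_integral_cong) (auto simp: indicator_def)
  finally show ?thesis by simp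
qed

lemma abs_add_lam: "(lam::real) > 0 \<Longrightarrow> \<bar>P + lam * Q\<bar> \<le> \<bar>P\<bar> + lam * \<bar>Q\<bar>"
  using abs_triangle_ineq[of P "lam * Q"] by (simp add: abs_mult)

lemma eps_pt:
  fixes V W :: "real \<Rightarrow> real" and ac :: "int \<Rightarrow> real" and alpha beta :: "nat \<Rightarrow> real"
    and j :: int and n :: nat and lam dt a :: real
  assumes lam: "lam > 0" and dt: "dt > 0" and a: "a > 0"
    and A1: "(\<Sum>l\<in>{-int r..int p}. ac l) = 0" "(\<Sum>l\<in>{-int r..int p}. real_of_int l * ac l) = a"
    and A2: "(\<Sum>\<sigma>\<in>{0..k}. alpha \<sigma>) = 0"
            "(\<Sum>\<sigma>\<in>{0..k}. real \<sigma> * alpha \<sigma>) = (\<Sum>\<sigma><k. beta \<sigma>)"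
    and Um: "u0 \<in> borel_measurable borel"
    and FU: "\<And>x y. x \<le> y \<Longrightarrow> u0 y - u0 x = (LBINT z:{x..y}. V z)"
    and FV: "\<And>x y. x \<le> y \<Longrightarrow> V y - V x = (LBINT z:{x..y}. W z)"
    and locV: "\<And>x y. set_integrable lborel {x..y} V"
    and locW: "\<And>x y. set_integrable lborel {x..y} W"
  defines "S \<equiv> (\<Sum>\<sigma>\<in>{0..k}. \<bar>alpha \<sigma>\<bar>) + lam * (\<Sum>\<sigma><k. \<bar>beta \<sigma>\<bar> * (\<Sum>l\<in>{-int r..int p}. \<bar>ac l\<bar>))"
    and "T \<equiv> (real r + real p) / lam + a * real k"
    and "w \<equiv> real_of_int j * (dt/lam) - a * (real n * dt)"
  shows "ennreal \<bar>scheme_op r p ac k alpha beta lam (uapp a lam u0 dt) j n / dt\<bar>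
     \<le> ennreal (S * T) * (\<integral>\<^sup>+x\<in>{w - dt*T .. w + dt/lam + dt*T}. ennreal \<bar>W x\<bar> \<partial>lborel)"
proof -
  define dx where "dx = dt / lam"
  have dx: "dx > 0" using lam dt by (simp add: dx_def)
  have dd: "lam * dx = dt" using lam by (simp add: dx_def)
  have S0: "S \<ge> 0" unfolding S_def using lam by (intro add_nonneg_nonneg mult_nonneg_nonneg sum_nonneg) auto
  have T0: "T \<ge> 0" unfolding T_def using lam a by simp
  define Ef where "Ef h = (LBINT t:{0..dx}. u0 (w + t + h))" for h
  define hh where "hh l \<sigma> = real_of_int l * dx - a * real \<sigma> * dt" for l :: int and \<sigma> :: nat
  have sh: "uapp a lam u0 dt (j + l) (n + \<sigma>) = Ef (hh l \<sigma>) / dx" for l \<sigma>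
    unfolding uapp_shift[OF lam dt] by (simp add: Ef_def w_def hh_def dx_def)
  have sh0: "uapp a lam u0 dt j (n + \<sigma>) = Ef (hh 0 \<sigma>) / dx" for \<sigma>
    using sh[of 0 \<sigma>] by simp
  have sch: "scheme_op r p ac k alpha beta lam (uapp a lam u0 dt) j n
      = ((\<Sum>\<sigma>\<in>{0..k}. alpha \<sigma> * Ef (hh 0 \<sigma>)) + lam * (\<Sum>\<sigma><k. beta \<sigma> * (\<Sum>l\<in>{-int r..int p}. ac l * Ef (hh l \<sigma>)))) / dx"
    unfolding scheme_op_def sh sh0
    by (simp add: sum_divide_distrib[symmetric] add_divide_distrib times_divide_eq_right)
  define A0 where "A0 = (LBINT t:{0..dx}. u0 (w + t))"
  define B0 where "B0 = (LBINT t:{0..dx}. V (w + t))"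
  define Rm where "Rm h = Ef h - A0 - h * B0" for h
  have alg: "(\<Sum>\<sigma>\<in>{0..k}. alpha \<sigma> * Ef (hh 0 \<sigma>)) + lam * (\<Sum>\<sigma><k. beta \<sigma> * (\<Sum>l\<in>{-int r..int p}. ac l * Ef (hh l \<sigma>)))
       = (\<Sum>\<sigma>\<in>{0..k}. alpha \<sigma> * Rm (hh 0 \<sigma>)) + lam * (\<Sum>\<sigma><k. beta \<sigma> * (\<Sum>l\<in>{-int r..int p}. ac l * Rm (hh l \<sigma>)))"
    by (rule scheme_alg[where AA=A0 and BB=B0, OF _ hh_def A1 A2 dd]) (simp add: Rm_def)
  define G where "G = (\<integral>\<^sup>+x\<in>{w - dt*T .. w + dx + dt*T}. ennreal \<bar>W x\<bar> \<partial>lborel)"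
  have "G \<noteq> top" unfolding G_def by (rule nn_fin_of_set_integrable[OF locW])
  define g where "g = enn2real G"
  have Gg: "G = ennreal g" unfolding g_def using \<open>G \<noteq> top\<close> by (simp add: ennreal_enn2real_if)
  have g0: "g \<ge> 0" unfolding g_def by simp
  have hb: "\<bar>hh l \<sigma>\<bar> \<le> dt * T" if l: "l \<in> {-int r..int p}" and s: "\<sigma> \<le> k" for l \<sigma>
  proof -
    have la: "\<bar>real_of_int l\<bar> \<le> real r + real p" using l by auto
    have "\<bar>hh l \<sigma>\<bar> \<le> \<bar>real_of_int l * dx\<bar> + \<bar>a * real \<sigma> * dt\<bar>"
      unfolding hh_def by (rule abs_triangle_ineq4)
    also have "\<dots> = \<bar>real_of_int l\<bar> * dx + a * real \<sigma> * dt"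
      using dx a dt by (simp add: abs_mult)
    also have "\<dots> \<le> (real r + real p) * dx + a * real k * dt"
      using la s dx a dt by (intro add_mono mult_right_mono mult_left_mono) auto
    also have "\<dots> = dt * T" unfolding T_def dx_def using lam by (simp add: field_simps)
    finally show ?thesis .
  qed
  have Rb: "\<bar>Rm h\<bar> \<le> dx * (dt * T) * g" if h: "\<bar>h\<bar> \<le> dt * T" for h
  proof -
    have "ennreal \<bar>Rm h\<bar> \<le> ennreal dx * ennreal \<bar>h\<bar> * (\<integral>\<^sup>+x\<in>{w-\<bar>h\<bar>..w+dx+\<bar>h\<bar>}. ennreal \<bar>W x\<bar> \<partial>lborel)"
      unfolding Rm_def Ef_def A0_def B0_def
      using avg_taylor[OF Um FU FV locV locW, of dx w h] dx by simp
    also have "\<dots> \<le> ennreal dx * ennreal (dt * T) * G"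
      unfolding G_def using h
      by (intro mult_mono nn_integral_mono ennreal_leI) (auto simp: indicator_def)
    also have "\<dots> = ennreal (dx * (dt * T) * g)"
      using dx dt T0 g0 by (simp add: Gg ennreal_mult)
    finally show ?thesis using dx dt T0 g0 by (subst (asm) ennreal_le_iff) auto
  qed
  define X where "X = dx * (dt * T) * g"
  have X0: "X \<ge> 0" unfolding X_def using dx dt T0 g0 by simp
  have b1: "\<bar>\<Sum>\<sigma>\<in>{0..k}. alpha \<sigma> * Rm (hh 0 \<sigma>)\<bar> \<le> (\<Sum>\<sigma>\<in>{0..k}. \<bar>alpha \<sigma>\<bar>) * X"
    unfolding sum_distrib_right
  proof (rule order_trans[OF sum_abs], rule sum_mono)
    fix \<sigma> assume "\<sigma> \<in> {0..k}"
    then have "\<bar>Rm (hh 0 \<sigma>)\<bar> \<le> X" unfolding X_def by (intro Rb hb) auto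
    then show "\<bar>alpha \<sigma> * Rm (hh 0 \<sigma>)\<bar> \<le> \<bar>alpha \<sigma>\<bar> * X"
      by (simp add: abs_mult mult_left_mono)
  qed
  have b2: "\<bar>\<Sum>\<sigma><k. beta \<sigma> * (\<Sum>l\<in>{-int r..int p}. ac l * Rm (hh l \<sigma>))\<bar>
      \<le> (\<Sum>\<sigma><k. \<bar>beta \<sigma>\<bar> * (\<Sum>l\<in>{-int r..int p}. \<bar>ac l\<bar>)) * X"
    unfolding sum_distrib_right
  proof (rule order_trans[OF sum_abs], rule sum_mono)
    fix \<sigma> assume s: "\<sigma> \<in> {..<k}"
    have "\<bar>\<Sum>l\<in>{-int r..int p}. ac l * Rm (hh l \<sigma>)\<bar> \<le> (\<Sum>l\<in>{-int r..int p}. \<bar>ac l\<bar>) * X"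
      unfolding sum_distrib_right
    proof (rule order_trans[OF sum_abs], rule sum_mono)
      fix l assume "l \<in> {-int r..int p}"
      then have "\<bar>Rm (hh l \<sigma>)\<bar> \<le> X" unfolding X_def using s by (intro Rb hb) auto
      then show "\<bar>ac l * Rm (hh l \<sigma>)\<bar> \<le> \<bar>ac l\<bar> * X"
        by (simp add: abs_mult mult_left_mono)
    qed
    then show "\<bar>beta \<sigma> * (\<Sum>l\<in>{-int r..int p}. ac l * Rm (hh l \<sigma>))\<bar> \<le> \<bar>beta \<sigma>\<bar> * (\<Sum>l\<in>{-int r..int p}. \<bar>ac l\<bar>) * X"
      by (simp add: abs_mult mult_left_mono mult.assoc)
  qed
  have "\<bar>(\<Sum>\<sigma>\<in>{0..k}. alpha \<sigma> * Rm (hh 0 \<sigma>)) + lam * (\<Sum>\<sigma><k. beta \<sigma> * (\<Sum>l\<in>{-int r..int p}. ac l * Rm (hh l \<sigma>)))\<bar>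
      \<le> S * X"
  proof -
    have "\<bar>(\<Sum>\<sigma>\<in>{0..k}. alpha \<sigma> * Rm (hh 0 \<sigma>)) + lam * (\<Sum>\<sigma><k. beta \<sigma> * (\<Sum>l\<in>{-int r..int p}. ac l * Rm (hh l \<sigma>)))\<bar>
      \<le> \<bar>\<Sum>\<sigma>\<in>{0..k}. alpha \<sigma> * Rm (hh 0 \<sigma>)\<bar> + lam * \<bar>\<Sum>\<sigma><k. beta \<sigma> * (\<Sum>l\<in>{-int r..int p}. ac l * Rm (hh l \<sigma>))\<bar>"
      using lam by (rule abs_add_lam)
    also have "\<dots> \<le> (\<Sum>\<sigma>\<in>{0..k}. \<bar>alpha \<sigma>\<bar>) * X + lam * ((\<Sum>\<sigma><k. \<bar>beta \<sigma>\<bar> * (\<Sum>l\<in>{-int r..int p}. \<bar>ac l\<bar>)) * X)"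
      using lam by (intro add_mono b1 mult_left_mono b2) auto
    also have "\<dots> = S * X" unfolding S_def by (simp add: algebra_simps)
    finally show ?thesis .
  qed
  then have "\<bar>scheme_op r p ac k alpha beta lam (uapp a lam u0 dt) j n\<bar> \<le> S * X / dx"
    unfolding sch alg using dx by (simp add: divide_right_mono)
  then have "\<bar>scheme_op r p ac k alpha beta lam (uapp a lam u0 dt) j n\<bar> / dt \<le> S * X / dx / dt"
    using dt by (intro divide_right_mono) auto
  then have "\<bar>scheme_op r p ac k alpha beta lam (uapp a lam u0 dt) j n / dt\<bar> \<le> S * X / dx / dt"
    using dt by simp
  also have "S * X / dx / dt = S * T * g" unfolding X_def using dx dt by (simp add: field_simps)
  finally have "ennreal \<bar>scheme_op r p ac k alpha beta lam (uapp a lam u0 dt) j n / dt\<bar> \<le> ennreal (S * T * g)"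
    by (rule ennreal_leI)
  also have "\<dots> = ennreal (S * T) * G" using S0 T0 g0 by (simp add: Gg ennreal_mult)
  finally show ?thesis by (simp add: G_def dx_def)
qed

lemma claim1:
  fixes V W :: "real \<Rightarrow> real" and ac :: "int \<Rightarrow> real" and alpha beta :: "nat \<Rightarrow> real"
    and lam dt a :: real
  assumes lam: "lam > 0" and dt: "dt > 0" and a: "a > 0"
    and A1: "(\<Sum>l\<in>{-int r..int p}. ac l) = 0" "(\<Sum>l\<in>{-int r..int p}. real_of_int l * ac l) = a"
    and A2: "(\<Sum>\<sigma>\<in>{0..k}. alpha \<sigma>) = 0"
            "(\<Sum>\<sigma>\<in>{0..k}. real \<sigma> * alpha \<sigma>) = (\<Sum>\<sigma><k. beta \<sigma>)"
    and Um: "u0 \<in> borel_measurable borel"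
    and Wm[measurable]: "W \<in> borel_measurable borel"
    and FU: "\<And>x y. x \<le> y \<Longrightarrow> u0 y - u0 x = (LBINT z:{x..y}. V z)"
    and FV: "\<And>x y. x \<le> y \<Longrightarrow> V y - V x = (LBINT z:{x..y}. W z)"
    and locV: "\<And>x y. set_integrable lborel {x..y} V"
    and locW: "\<And>x y. set_integrable lborel {x..y} W"
  defines "S \<equiv> (\<Sum>\<sigma>\<in>{0..k}. \<bar>alpha \<sigma>\<bar>) + lam * (\<Sum>\<sigma><k. \<bar>beta \<sigma>\<bar> * (\<Sum>l\<in>{-int r..int p}. \<bar>ac l\<bar>))"
    and "T \<equiv> (real r + real p) / lam + a * real k"
    and "M \<equiv> nat \<lceil>1 + 2 * lam * ((real r + real p) / lam + a * real k)\<rceil> + 1"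
  shows "(SUP m\<in>{k..}. (\<Sum>\<^sub>\<infinity> j\<in>{int r..}. ennreal (dt / lam * (eps_err a r p ac k alpha beta lam u0 dt j m)\<^sup>2)))
     \<le> ennreal ((S*T)\<^sup>2 * (1/lam + 2*T) * real M / lam * dt\<^sup>2) * (\<integral>\<^sup>+x. ennreal ((W x)\<^sup>2) \<partial>lborel)"
proof (rule SUP_least)
  fix m assume "m \<in> {k..}"
  define n where "n = m - k"
  define dx where "dx = dt / lam"
  have dx: "dx > 0" using lam dt by (simp add: dx_def)
  have S0: "S \<ge> 0" unfolding S_def using lam by (intro add_nonneg_nonneg mult_nonneg_nonneg sum_nonneg) auto
  have T0: "T \<ge> 0" unfolding T_def using lam a by simp
  define R where "R = dt * T"
  define L where "L = dx + 2 * R"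
  have L0: "L \<ge> 0" using dx dt T0 by (simp add: L_def R_def)
  define c where "c = a * (real n * dt) + R"
  define I where "I j = {real_of_int j * dx - c .. real_of_int j * dx - c + L}" for j :: int
  define Q where "Q j = (\<integral>\<^sup>+x. ennreal ((W x)\<^sup>2) * indicator (I j) x \<partial>lborel)" for j
  define K where "K = dt / lam * (S*T)\<^sup>2 * L"
  have K0: "K \<ge> 0" using lam dt L0 by (simp add: K_def)
  have pt: "ennreal (dt / lam * (eps_err a r p ac k alpha beta lam u0 dt j m)\<^sup>2) \<le> ennreal K * Q j" for j
  proof -
    define e where "e = eps_err a r p ac k alpha beta lam u0 dt j m"
    define G where "G = (\<integral>\<^sup>+x\<in>I j. ennreal \<bar>W x\<bar> \<partial>lborel)"
    have Ieq: "I j = {(real_of_int j * (dt/lam) - a * (real n * dt)) - dt*T .. (real_of_int j * (dt/lam) - a * (real n * dt)) + dt/lam + dt*T}"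
      unfolding I_def c_def L_def R_def dx_def by (simp add: algebra_simps)
    have "e = scheme_op r p ac k alpha beta lam (uapp a lam u0 dt) j n / dt"
      unfolding e_def eps_err_def n_def by simp
    then have e1: "ennreal \<bar>e\<bar> \<le> ennreal (S*T) * G"
      unfolding G_def Ieq S_def T_def
      by (simp only:) (rule eps_pt[OF lam dt a A1 A2 Um FU FV locV locW])
    have "ennreal (dt / lam * e\<^sup>2) = ennreal (dt/lam) * (ennreal \<bar>e\<bar>)\<^sup>2"
      using lam dt by (simp add: ennreal_mult[symmetric] ennreal_power power2_abs del: ennreal_mult)
    also have "\<dots> \<le> ennreal (dt/lam) * (ennreal (S*T) * G)\<^sup>2"
      by (intro mult_left_mono power_mono e1) auto
    also have "\<dots> = ennreal (dt/lam) * ennreal ((S*T)\<^sup>2) * G\<^sup>2"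
      using S0 T0 by (simp add: power_mult_distrib ennreal_power mult.assoc)
    also have "G\<^sup>2 \<le> ennreal L * Q j"
    proof -
      have "G\<^sup>2 \<le> ennreal ((real_of_int j * dx - c + L) - (real_of_int j * dx - c)) *
          (\<integral>\<^sup>+x\<in>{real_of_int j * dx - c .. real_of_int j * dx - c + L}. ennreal ((W x)\<^sup>2) \<partial>lborel)"
        unfolding G_def I_def by (rule cs_interval[OF Wm]) (use L0 in simp)
      then show ?thesis by (simp add: Q_def I_def)
    qed
    then have "ennreal (dt/lam) * ennreal ((S*T)\<^sup>2) * G\<^sup>2 \<le> ennreal (dt/lam) * ennreal ((S*T)\<^sup>2) * (ennreal L * Q j)"
      by (intro mult_left_mono) auto
    also have "\<dots> = ennreal K * Q j"
    proof -
      have "ennreal K = ennreal (dt/lam * (S*T)\<^sup>2) * ennreal L" unfolding K_def using L0 by (rule ennreal_mult'')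
      also have "ennreal (dt/lam * (S*T)\<^sup>2) = ennreal (dt/lam) * ennreal ((S*T)\<^sup>2)" by (rule ennreal_mult'') simp
      finally show ?thesis by (simp add: mult.assoc)
    qed
    finally show ?thesis by (simp add: e_def)
  qed
  have Ldx: "L / dx = 1 + 2 * lam * T" unfolding L_def R_def dx_def using lam dt by (simp add: field_simps)
  have MM: "M = nat \<lceil>L/dx\<rceil> + 1" unfolding Ldx M_def T_def ..
  show "(\<Sum>\<^sub>\<infinity> j\<in>{int r..}. ennreal (dt / lam * (eps_err a r p ac k alpha beta lam u0 dt j m)\<^sup>2))
     \<le> ennreal ((S*T)\<^sup>2 * (1/lam + 2*T) * real M / lam * dt\<^sup>2) * (\<integral>\<^sup>+x. ennreal ((W x)\<^sup>2) \<partial>lborel)"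
  proof (rule infsum_le_finite_sums)
    fix F assume F: "finite F" "F \<subseteq> {int r..}"
    have "(\<Sum>j\<in>F. ennreal (dt / lam * (eps_err a r p ac k alpha beta lam u0 dt j m)\<^sup>2)) \<le> (\<Sum>j\<in>F. ennreal K * Q j)"
      by (intro sum_mono pt)
    also have "\<dots> = ennreal K * (\<Sum>j\<in>F. Q j)" by (simp add: sum_distrib_left)
    also have "(\<Sum>j\<in>F. Q j) = (\<integral>\<^sup>+x. ennreal ((W x)\<^sup>2) * (\<Sum>j\<in>F. indicator (I j) x) \<partial>lborel)"
      unfolding Q_def sum_distrib_left
      by (rule nn_integral_sum[symmetric]) (auto simp: I_def)
    also have "\<dots> \<le> (\<integral>\<^sup>+x. ennreal ((W x)\<^sup>2) * of_nat M \<partial>lborel)"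
    proof (rule nn_integral_mono)
      fix x
      have "(\<Sum>j\<in>F. indicator (I j) x :: ennreal) \<le> of_nat (nat \<lceil>L/dx\<rceil> + 1)"
        unfolding I_def by (rule count_bound[OF F(1) dx L0])
      then show "ennreal ((W x)\<^sup>2) * (\<Sum>j\<in>F. indicator (I j) x) \<le> ennreal ((W x)\<^sup>2) * of_nat M"
        unfolding MM by (intro mult_left_mono) auto
    qed
    also have "\<dots> = of_nat M * (\<integral>\<^sup>+x. ennreal ((W x)\<^sup>2) \<partial>lborel)"
      by (subst nn_integral_multc) (auto simp: mult.commute)
    finally have "(\<Sum>j\<in>F. ennreal (dt / lam * (eps_err a r p ac k alpha beta lam u0 dt j m)\<^sup>2))
        \<le> ennreal K * (of_nat M * (\<integral>\<^sup>+x. ennreal ((W x)\<^sup>2) \<partial>lborel))"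
      by (simp add: mult_left_mono)
    also have "\<dots> = ennreal (K * real M) * (\<integral>\<^sup>+x. ennreal ((W x)\<^sup>2) \<partial>lborel)"
      using K0 by (simp add: ennreal_mult ennreal_of_nat_eq_real_of_nat mult.assoc)
    also have "K * real M = (S*T)\<^sup>2 * (1/lam + 2*T) * real M / lam * dt\<^sup>2"
      unfolding K_def L_def R_def dx_def using lam by (simp add: field_simps power2_eq_square)
    finally show "(\<Sum>j\<in>F. ennreal (dt / lam * (eps_err a r p ac k alpha beta lam u0 dt j m)\<^sup>2))
        \<le> ennreal ((S*T)\<^sup>2 * (1/lam + 2*T) * real M / lam * dt\<^sup>2) * (\<integral>\<^sup>+x. ennreal ((W x)\<^sup>2) \<partial>lborel)" .
  qed (rule nonneg_summable_on_complete, simp)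
qed

lemma claim2:
  fixes V :: "real \<Rightarrow> real" and lam dt a :: real and r k :: nat
  assumes lam: "lam > 0" and dt: "dt > 0" and a: "a > 0"
    and Um: "u0 \<in> borel_measurable borel"
    and Vm[measurable]: "V \<in> borel_measurable borel"
    and FU: "\<And>x y. x \<le> y \<Longrightarrow> u0 y - u0 x = (LBINT z:{x..y}. V z)"
    and locV: "\<And>x y. set_integrable lborel {x..y} V"
    and U0: "\<And>x. x \<le> 0 \<Longrightarrow> u0 x = 0"
  defines "N2 \<equiv> nat \<lceil>real r / (lam * a)\<rceil>"
  shows "(\<Sum>\<^sub>\<infinity> n\<in>{k..}. (\<Sum>j\<in>{0..<int r}. ennreal (dt * (uapp a lam u0 dt j n)\<^sup>2)))
     \<le> ennreal (real N2 * real r * real r / lam * dt\<^sup>2) * (\<integral>\<^sup>+x\<in>{0..}. ennreal ((V x)\<^sup>2) \<partial>lborel)"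
proof -
  define dx where "dx = dt / lam"
  have dx: "dx > 0" using lam dt by (simp add: dx_def)
  define P where "P = (\<integral>\<^sup>+x\<in>{0..}. ennreal ((V x)\<^sup>2) \<partial>lborel)"
  define H where "H = (\<integral>\<^sup>+y\<in>{0..real r * dx}. ennreal \<bar>V y\<bar> \<partial>lborel)"
  have "H \<noteq> top" unfolding H_def by (rule nn_fin_of_set_integrable[OF locV])
  define h where "h = enn2real H"
  have Hh: "H = ennreal h" unfolding h_def using \<open>H \<noteq> top\<close> by (simp add: ennreal_enn2real_if)
  have h0: "h \<ge> 0" unfolding h_def by simp
  have Hsq: "H\<^sup>2 \<le> ennreal (real r * dx) * P"
  proof -
    have "H\<^sup>2 \<le> ennreal (real r * dx - 0) * (\<integral>\<^sup>+x\<in>{0..real r * dx}. ennreal ((V x)\<^sup>2) \<partial>lborel)"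
      unfolding H_def by (rule cs_interval[OF Vm]) (use dx in simp)
    also have "\<dots> \<le> ennreal (real r * dx) * P"
      unfolding P_def diff_zero by (intro mult_left_mono nn_integral_mono) (auto simp: indicator_def)
    finally show ?thesis .
  qed
  have Ub: "\<bar>u0 x\<bar> \<le> h" if x: "x \<le> real r * dx" for x
  proof (cases "x \<le> 0")
    case True then show ?thesis using U0 h0 by simp
  next
    case False
    have "u0 x = u0 x - u0 0" using U0[of 0] by simp
    also have "\<dots> = (LBINT z:{0..x}. V z)" using FU[of 0 x] False by simp
    finally have "ennreal \<bar>u0 x\<bar> \<le> (\<integral>\<^sup>+y\<in>{0..x}. ennreal \<bar>V y\<bar> \<partial>lborel)"
      using set_int_abs_enn[OF locV[of 0 x]] by simp
    also have "\<dots> \<le> H" unfolding H_def using x by (intro nn_integral_mono) (auto simp: indicator_def)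
    finally show ?thesis using h0 by (simp add: Hh)
  qed
  define B where "B = ennreal (dt * (real r * dx)) * P"
  have pt: "ennreal (dt * (uapp a lam u0 dt j n)\<^sup>2) \<le> (if n < N2 then B else 0)"
    if j: "j \<in> {0..<int r}" for j n
  proof -
    define w where "w = real_of_int j * dx - a * (real n * dt)"
    define E where "E = (LBINT t:{0..dx}. u0 (w + t))"
    have ua: "uapp a lam u0 dt j n = E / dx"
      using uapp_shift[OF lam dt, of a u0 j 0 n 0] by (simp add: E_def w_def dx_def)
    have jr: "real_of_int j + 1 \<le> real r" using j by simp
    show ?thesis
    proof (cases "n < N2")
      case False
      then have "real N2 \<le> real n" by simp
      moreover have "real r / (lam * a) \<le> real N2" unfolding N2_def by (rule real_nat_ceiling_ge)
      ultimately have "real r / (lam * a) \<le> real n" by linarith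
      then have "real r * dx \<le> a * (real n * dt)"
        using lam a dt by (simp add: dx_def field_simps mult.commute mult.left_commute)
      moreover have "(real_of_int j + 1) * dx \<le> real r * dx" using jr dx by (intro mult_right_mono) auto
      ultimately have zz: "u0 (w + t) = 0" if "t \<in> {0..dx}" for t
        using that by (intro U0) (simp add: w_def algebra_simps)
      have "E = (LBINT t:{0..dx}. 0)"
        unfolding E_def using zz by (intro set_lebesgue_integral_cong) auto
      then show ?thesis using False ua by simp
    next
      case True
      have iE: "set_integrable lborel {0..dx} (\<lambda>t. u0 (w + t))"
        by (rule U_int[OF Um FU locV])
      have "\<bar>E\<bar> \<le> (LBINT t:{0..dx}. \<bar>u0 (w + t)\<bar>)"
        unfolding E_def using set_integral_norm_bound[OF iE] by simp
      also have "\<dots> \<le> (LBINT t:{0..dx}. h)"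
      proof (rule set_integral_mono)
        show "set_integrable lborel {0..dx} (\<lambda>t. \<bar>u0 (w + t)\<bar>)" by (rule set_integrable_abs[OF iE])
        show "set_integrable lborel {0..dx} (\<lambda>t. h)" by (rule set_integrable_const_Icc)
        fix t assume "t \<in> {0..dx}"
        moreover have "(real_of_int j + 1) * dx \<le> real r * dx" using jr dx by (intro mult_right_mono) auto
        moreover have "0 \<le> a * (real n * dt)" using a dt by simp
        ultimately have "w + t \<le> real r * dx"
          by (simp add: w_def algebra_simps)
        then show "\<bar>u0 (w + t)\<bar> \<le> h" by (rule Ub)
      qed
      also have "\<dots> = dx * h" using dx by (simp add: set_integral_const)
      finally have Eb: "\<bar>E\<bar> \<le> dx * h" .
      have "\<bar>uapp a lam u0 dt j n\<bar> = \<bar>E\<bar> / dx" using dx ua by (simp add: abs_divide)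
      also have "\<dots> \<le> h" using Eb dx by (simp add: divide_le_eq mult.commute)
      finally have "\<bar>uapp a lam u0 dt j n\<bar> \<le> h" .
      then have "(uapp a lam u0 dt j n)\<^sup>2 \<le> h\<^sup>2" using power_mono[OF _ abs_ge_zero, of _ h 2] by simp
      then have "ennreal (dt * (uapp a lam u0 dt j n)\<^sup>2) \<le> ennreal (dt * h\<^sup>2)"
        using dt by (intro ennreal_leI mult_left_mono) auto
      also have "\<dots> = ennreal dt * H\<^sup>2" using dt h0 by (simp add: Hh ennreal_mult ennreal_power)
      also have "\<dots> \<le> ennreal dt * (ennreal (real r * dx) * P)" by (intro mult_left_mono Hsq) auto
      also have "\<dots> = B" unfolding B_def using dt dx by (simp add: ennreal_mult mult.assoc)
      finally show ?thesis using True by simp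
    qed
  qed
  show ?thesis
  proof (rule infsum_le_finite_sums)
    show "(\<lambda>n. \<Sum>j\<in>{0..<int r}. ennreal (dt * (uapp a lam u0 dt j n)\<^sup>2)) summable_on {k..}"
      by (rule nonneg_summable_on_complete) simp
    fix F assume F: "finite F" "F \<subseteq> {k..}"
    define g where "g n = of_nat r * (if n < N2 then B else 0)" for n
    have "(\<Sum>n\<in>F. \<Sum>j\<in>{0..<int r}. ennreal (dt * (uapp a lam u0 dt j n)\<^sup>2)) \<le> (\<Sum>n\<in>F. g n)"
    proof (rule sum_mono)
      fix n
      have "(\<Sum>j\<in>{0..<int r}. ennreal (dt * (uapp a lam u0 dt j n)\<^sup>2)) \<le> (\<Sum>j\<in>{0..<int r}. (if n < N2 then B else 0))"
        by (intro sum_mono pt)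
      also have "\<dots> = g n" by (simp add: g_def)
      finally show "(\<Sum>j\<in>{0..<int r}. ennreal (dt * (uapp a lam u0 dt j n)\<^sup>2)) \<le> g n" .
    qed
    also have "\<dots> \<le> (\<Sum>n\<in>F \<union> {..<N2}. g n)"
      using F by (intro sum_mono2) auto
    also have "\<dots> = (\<Sum>n\<in>{..<N2}. g n)"
      using F by (intro sum.mono_neutral_right) (auto simp: g_def)
    also have "\<dots> = of_nat N2 * (of_nat r * B)" by (simp add: g_def)
    also have "\<dots> = ennreal (real N2 * real r * real r / lam * dt\<^sup>2) * P"
    proof -
      define X where "X = dt * (real r * dx)"
      have X0: "X \<ge> 0" using dt dx by (simp add: X_def)
      have "ennreal (real N2 * real r * X) = ennreal (real N2) * ennreal (real r) * ennreal X"
        using X0 by (simp add: ennreal_mult)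
      moreover have "real N2 * real r * X = real N2 * real r * real r / lam * dt\<^sup>2"
        unfolding X_def dx_def using lam by (simp add: field_simps power2_eq_square)
      ultimately show ?thesis unfolding B_def X_def[symmetric]
        by (simp add: ennreal_of_nat_eq_real_of_nat mult.assoc)
    qed
    finally show "(\<Sum>n\<in>F. \<Sum>j\<in>{0..<int r}. ennreal (dt * (uapp a lam u0 dt j n)\<^sup>2))
        \<le> ennreal (real N2 * real r * real r / lam * dt\<^sup>2) * (\<integral>\<^sup>+x\<in>{0..}. ennreal ((V x)\<^sup>2) \<partial>lborel)"
      by (simp add: P_def)
  qed
qed

theorem proposition3p1:
  fixes a lam :: real and r p k :: nat and ac :: "int \<Rightarrow> real"
    and alpha beta :: "nat \<Rightarrow> real"
  assumes a_pos: "a > 0"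
    and lam_pos: "lam > 0"
    and ac_r: "ac (- int r) \<noteq> 0" and ac_p: "ac (int p) \<noteq> 0"
    and k_ge: "k \<ge> 1" and alpha_k: "alpha k = 1"
    and alpha_beta0: "\<bar>alpha 0\<bar> + \<bar>beta 0\<bar> > 0"
    and A1: "(\<Sum>l\<in>{-int r..int p}. ac l) = 0" "(\<Sum>l\<in>{-int r..int p}. real_of_int l * ac l) = a"
    and A2: "(\<Sum>\<sigma>\<in>{0..k}. alpha \<sigma>) = 0"
            "(\<Sum>\<sigma>\<in>{0..k}. real \<sigma> * alpha \<sigma>) = (\<Sum>\<sigma><k. beta \<sigma>)"
    and A3: "l2_stable r p ac k alpha beta lam"
    and A4: "\<And>\<theta>. \<theta> \<in> {-pi..pi} - {0} \<Longrightarrow> symbolA r p ac (cis \<theta>) \<noteq> 0"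
  shows "\<exists>C>0. \<forall>u0 u1 u2 dt. H2_zero u0 u1 u2 \<and> 0 < dt \<and> dt \<le> 1 \<longrightarrow>
           (SUP n\<in>{k..}. (\<Sum>\<^sub>\<infinity> j\<in>{int r..}.
               ennreal (dt / lam * (eps_err a r p ac k alpha beta lam u0 dt j n)\<^sup>2)))
             \<le> ennreal (C * dt\<^sup>2) * L2_norm_sq u2
         \<and> (\<Sum>\<^sub>\<infinity> n\<in>{k..}. (\<Sum>j\<in>{0..<int r}.
               ennreal (dt * (uapp a lam u0 dt j n)\<^sup>2)))
             \<le> ennreal (C * dt\<^sup>2) * L2_norm_sq u1"
proof -
  define S where "S = (\<Sum>\<sigma>\<in>{0..k}. \<bar>alpha \<sigma>\<bar>) + lam * (\<Sum>\<sigma><k. \<bar>beta \<sigma>\<bar> * (\<Sum>l\<in>{-int r..int p}. \<bar>ac l\<bar>))"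
  define T where "T = (real r + real p) / lam + a * real k"
  define M where "M = nat \<lceil>1 + 2 * lam * ((real r + real p) / lam + a * real k)\<rceil> + 1"
  define N2 where "N2 = nat \<lceil>real r / (lam * a)\<rceil>"
  define C1 where "C1 = (S*T)\<^sup>2 * (1/lam + 2*T) * real M / lam"
  define C2 where "C2 = real N2 * real r * real r / lam"
  define C where "C = max C1 C2 + 1"
  have T0: "T \<ge> 0" unfolding T_def using lam_pos a_pos by simp
  have C10: "C1 \<ge> 0" unfolding C1_def using lam_pos T0 by simp
  have C20: "C2 \<ge> 0" unfolding C2_def using lam_pos by simp
  have Cpos: "C > 0" unfolding C_def using C10 by simp
  show ?thesis
  proof (rule exI[of _ C], intro conjI allI impI)
    show "C > 0" by (rule Cpos)
    fix u0 u1 u2 :: "real \<Rightarrow> real" and dt :: real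
    assume H: "H2_zero u0 u1 u2 \<and> 0 < dt \<and> dt \<le> 1"
    then have dt: "dt > 0" and H2: "H2_zero u0 u1 u2" by auto
    from H2 have L0: "L2_half u0" and L1: "L2_half u1" and L2: "L2_half u2"
      and I0: "\<And>x. x \<ge> 0 \<Longrightarrow> u0 x = (LBINT y:{0..x}. u1 y)"
      and I1: "\<And>x. x \<ge> 0 \<Longrightarrow> u1 x = (LBINT y:{0..x}. u2 y)"
      and N0: "\<And>x. x < 0 \<Longrightarrow> u0 x = 0"
      unfolding H2_zero_def by auto
    have m0[measurable]: "u0 \<in> borel_measurable borel" using L0 unfolding L2_half_def by simp
    have m1[measurable]: "u1 \<in> borel_measurable borel" using L1 unfolding L2_half_def by simp
    have m2[measurable]: "u2 \<in> borel_measurable borel" using L2 unfolding L2_half_def by simp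
    define V where "V x = (if x < 0 then 0 else u1 x)" for x :: real
    define W where "W x = (if x < 0 then 0 else u2 x)" for x :: real
    have Vm[measurable]: "V \<in> borel_measurable borel" unfolding V_def by measurable
    have Wm[measurable]: "W \<in> borel_measurable borel" unfolding W_def by measurable
    have VV: "(\<integral>\<^sup>+x. ennreal ((V x)\<^sup>2) \<partial>lborel) = L2_norm_sq u1"
      unfolding L2_norm_sq_def V_def by (rule nn_integral_cong) (auto simp: indicator_def)
    have WW: "(\<integral>\<^sup>+x. ennreal ((W x)\<^sup>2) \<partial>lborel) = L2_norm_sq u2"
      unfolding L2_norm_sq_def W_def by (rule nn_integral_cong) (auto simp: indicator_def)
    have VV': "(\<integral>\<^sup>+x\<in>{0..}. ennreal ((V x)\<^sup>2) \<partial>lborel) = L2_norm_sq u1"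
      unfolding L2_norm_sq_def V_def by (rule nn_integral_cong) (auto simp: indicator_def)
    have locV: "set_integrable lborel {x..y} V" for x y
    proof (rule loc_int)
      show "V \<in> borel_measurable lborel" by simp
      show "(\<integral>\<^sup>+x. ennreal ((V x)\<^sup>2) \<partial>lborel) < \<infinity>"
        unfolding VV using L1 by (simp add: L2_half_def L2_norm_sq_def)
    qed
    have locW: "set_integrable lborel {x..y} W" for x y
    proof (rule loc_int)
      show "W \<in> borel_measurable lborel" by simp
      show "(\<integral>\<^sup>+x. ennreal ((W x)\<^sup>2) \<partial>lborel) < \<infinity>"
        unfolding WW using L2 by (simp add: L2_half_def L2_norm_sq_def)
    qed
    have FU: "u0 y - u0 x = (LBINT z:{x..y}. V z)" if "x \<le> y" for x y
    proof (rule ftc_ext[OF locV _ _ N0 that])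
      show "V z = 0" if "z < 0" for z using that by (simp add: V_def)
      show "u0 z = (LBINT y:{0..z}. V y)" if "z \<ge> 0" for z
        unfolding I0[OF that] by (rule set_lebesgue_integral_cong) (auto simp: V_def)
    qed
    have FV: "V y - V x = (LBINT z:{x..y}. W z)" if "x \<le> y" for x y
    proof (rule ftc_ext[OF locW _ _ _ that])
      show "W z = 0" if "z < 0" for z using that by (simp add: W_def)
      show "V z = (LBINT y:{0..z}. W y)" if "z \<ge> 0" for z
        unfolding V_def using that I1[OF that]
        by (simp, intro set_lebesgue_integral_cong) (auto simp: W_def)
      show "V z = 0" if "z < 0" for z using that by (simp add: V_def)
    qed
    have U0: "u0 x = 0" if "x \<le> 0" for x
    proof (cases "x < 0")
      case True then show ?thesis by (rule N0)
    next
      case False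
      then have x: "x = 0" using that by simp
      have "(LBINT y=ereal 0..ereal 0. u1 y) = (LBINT y:{0..0}. u1 y)"
        by (rule interval_integral_Icc) simp
      moreover have "(LBINT y=ereal 0..ereal 0. u1 y) = 0"
        by (simp add: interval_lebesgue_integral_def set_lebesgue_integral_def)
      ultimately show ?thesis using I0[of 0] x by simp
    qed
    have c1: "(SUP m\<in>{k..}. (\<Sum>\<^sub>\<infinity> j\<in>{int r..}. ennreal (dt / lam * (eps_err a r p ac k alpha beta lam u0 dt j m)\<^sup>2)))
       \<le> ennreal (C1 * dt\<^sup>2) * L2_norm_sq u2"
      using claim1[OF lam_pos dt a_pos A1 A2 m0 Wm FU FV locV locW] unfolding WW
      by (simp add: C1_def S_def T_def M_def)
    have c2: "(\<Sum>\<^sub>\<infinity> n\<in>{k..}. (\<Sum>j\<in>{0..<int r}. ennreal (dt * (uapp a lam u0 dt j n)\<^sup>2)))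
       \<le> ennreal (C2 * dt\<^sup>2) * L2_norm_sq u1"
      using claim2[OF lam_pos dt a_pos m0 Vm FU locV U0] unfolding VV'
      by (simp add: C2_def N2_def)
    have le1: "ennreal (C1 * dt\<^sup>2) \<le> ennreal (C * dt\<^sup>2)"
      unfolding C_def by (intro ennreal_leI mult_right_mono) auto
    have le2: "ennreal (C2 * dt\<^sup>2) \<le> ennreal (C * dt\<^sup>2)"
      unfolding C_def by (intro ennreal_leI mult_right_mono) auto
    show "(SUP m\<in>{k..}. (\<Sum>\<^sub>\<infinity> j\<in>{int r..}. ennreal (dt / lam * (eps_err a r p ac k alpha beta lam u0 dt j m)\<^sup>2)))
       \<le> ennreal (C * dt\<^sup>2) * L2_norm_sq u2"
      using c1 le1 by (meson mult_right_mono order_trans zero_le)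
    show "(\<Sum>\<^sub>\<infinity> n\<in>{k..}. (\<Sum>j\<in>{0..<int r}. ennreal (dt * (uapp a lam u0 dt j n)\<^sup>2)))
       \<le> ennreal (C * dt\<^sup>2) * L2_norm_sq u1"
      using c2 le2 by (meson mult_right_mono order_trans zero_le)
  qed
qed

end
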